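(* Let $p>0$, $b\ge1$, and let $D(t)=\frac{(2b+1)^p}{2^p\Gamma(p)}\int_0^t s^{p-1}e^{-(b+\frac12)s}ds$, $t\ge0$. Let $f:\mathbb{R}\to\mathbb{R}$ be defined on $[0,1)$ as the inverse of the increasing bijection $[1,\infty)\ni t\mapsto D(\log t)\in[0,1)$, and $f=0$ outside $[0,1)$. Take $c=0$, $u(x)=x$ (so $\beta=1$). Then $\int_{\mathrm{supp}(f)}|f(s)|^{\beta+\frac{c-1}{2}}ds<\infty$, and there is $\gamma>0$ with $|m_{f,\pm}(x)|\ge\gamma(1+|x|)^{-p}$ for all $x\in\mathbb{R}$.
   Context: $m_{f,+}(x)=\int_{\mathrm{supp}(f)} u(f(s))|f(s)|^{(c-1)/2}e^{-ix\log|f(s)|}ds$, $m_{f,-}(x)=\int_{\mathrm{supp}(f)} u(f(s))|f(s)|^{(c-1)/2}e^{-ix\log|f(s)|}\,\mathrm{sgn}f(s)\,ds$, where $\mathrm{supp}(f)=\{f\ne0\}$. *)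

theory Defs
  imports "HOL-Analysis.Analysis"
begin

definition Dfun :: "real \<Rightarrow> real \<Rightarrow> real \<Rightarrow> real" where
  "Dfun p b t = (2*b+1) powr p / (2 powr p * Gamma p) *
      (LINT s:{0..t}|lborel. s powr (p-1) * exp (-(b + 1/2) * s))"

definition ffun :: "real \<Rightarrow> real \<Rightarrow> real \<Rightarrow> real" where
  "ffun p b s = (if s \<in> {0..<1} then the_inv_into {1..} (\<lambda>t. Dfun p b (ln t)) s else 0)"

definition suppf :: "(real \<Rightarrow> real) \<Rightarrow> real set" where
  "suppf f = {s. f s \<noteq> 0}"

definition m_plus :: "(real \<Rightarrow> real) \<Rightarrow> real \<Rightarrow> (real \<Rightarrow> real) \<Rightarrow> real \<Rightarrow> complex" where
  "m_plus u c f x = (LINT s:suppf f|lborel.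
      complex_of_real (u (f s) * \<bar>f s\<bar> powr ((c-1)/2)) *
      exp (- \<i> * complex_of_real x * complex_of_real (ln \<bar>f s\<bar>)))"

definition m_minus :: "(real \<Rightarrow> real) \<Rightarrow> real \<Rightarrow> (real \<Rightarrow> real) \<Rightarrow> real \<Rightarrow> complex" where
  "m_minus u c f x = (LINT s:suppf f|lborel.
      complex_of_real (u (f s) * \<bar>f s\<bar> powr ((c-1)/2)) *
      exp (- \<i> * complex_of_real x * complex_of_real (ln \<bar>f s\<bar>)) *
      complex_of_real (sgn (f s)))"

end

theory Submission
  imports Defs "HOL-Probability.Probability"
begin


lemma gamma_nn:
  fixes q c :: real assumes q: "q > 0" and c: "c > 0"
  shows "(\<integral>\<^sup>+ y. ennreal (indicator {0<..} y * (y powr (q-1) * exp (-c*y))) \<partial>lborel)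
         = ennreal (Gamma q / c powr q)"
proof -
  have "ennreal (Gamma q) = (\<integral>\<^sup>+t. ennreal (indicator {0..} t * t powr (q - 1) / exp t) \<partial>lborel)"
    using Gamma_conv_nn_integral_real[OF q] by simp
  also have "\<dots> = ennreal c * (\<integral>\<^sup>+y. ennreal (indicator {0..} (0 + c*y) * (0 + c*y) powr (q - 1) / exp (0 + c*y)) \<partial>lborel)"
    using nn_integral_real_affine[of "\<lambda>t. ennreal (indicator {0..} t * t powr (q - 1) / exp t)" c 0] c
    by simp
  also have "(\<lambda>y. ennreal (indicator {0..} (0 + c*y) * (0 + c*y) powr (q - 1) / exp (0 + c*y)))
     = (\<lambda>y. ennreal (c powr (q-1)) * ennreal (indicator {0<..} y * (y powr (q-1) * exp (-c*y))))"
  proof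
    fix y show "ennreal (indicator {0..} (0 + c*y) * (0 + c*y) powr (q - 1) / exp (0 + c*y)) =
      ennreal (c powr (q-1)) * ennreal (indicator {0<..} y * (y powr (q-1) * exp (-c*y)))"
    proof (cases "y > 0")
      case True
      then show ?thesis using c
        by (simp add: ennreal_mult'[symmetric] powr_mult exp_minus field_simps indicator_def zero_le_mult_iff)
    next
      case False
      then show ?thesis using c by (auto simp: indicator_def zero_le_mult_iff)
    qed
  qed
  also have "ennreal c * (\<integral>\<^sup>+y. ennreal (c powr (q-1)) * ennreal (indicator {0<..} y * (y powr (q-1) * exp (-c*y))) \<partial>lborel)
     = ennreal (c * c powr (q-1)) * (\<integral>\<^sup>+y. ennreal (indicator {0<..} y * (y powr (q-1) * exp (-c*y))) \<partial>lborel)"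
    using c by (subst nn_integral_cmult) (auto simp: ennreal_mult mult.assoc)
  also have "c * c powr (q-1) = c powr q" using c by (simp add: powr_diff)
  finally have *: "ennreal (Gamma q) = ennreal (c powr q) * (\<integral>\<^sup>+y. ennreal (indicator {0<..} y * (y powr (q-1) * exp (-c*y))) \<partial>lborel)" .
  have "ennreal (Gamma q / c powr q) = ennreal (Gamma q) / ennreal (c powr q)"
    using c q by (simp add: divide_ennreal Gamma_real_pos)
  also have "\<dots> = (\<integral>\<^sup>+y. ennreal (indicator {0<..} y * (y powr (q-1) * exp (-c*y))) \<partial>lborel)"
    unfolding * using c by (subst mult.commute, subst ennreal_mult_divide_eq) auto
  finally show ?thesis by simp
qed

lemma gamma_int:
  fixes q c :: real assumes q: "q > 0" and c: "c > 0"
  shows "set_integrable lborel {0<..} (\<lambda>y. y powr (q-1) * exp (-c*y))"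
    and "(LINT y:{0<..}|lborel. y powr (q-1) * exp (-c*y)) = Gamma q / c powr q"
proof -
  have "integrable lborel (\<lambda>y. indicator {0<..} y * (y powr (q-1) * exp (-c*y))) \<and>
        integral\<^sup>L lborel (\<lambda>y. indicator {0<..} y * (y powr (q-1) * exp (-c*y))) = Gamma q / c powr q"
    using gamma_nn[OF q c]
    by (subst (asm) nn_integral_eq_integrable) (auto simp: Gamma_real_pos q c)
  then show "set_integrable lborel {0<..} (\<lambda>y. y powr (q-1) * exp (-c*y))"
    "(LINT y:{0<..}|lborel. y powr (q-1) * exp (-c*y)) = Gamma q / c powr q"
    by (simp_all add: set_integrable_def set_lebesgue_integral_def)
qed

definition gfun :: "real \<Rightarrow> real \<Rightarrow> real \<Rightarrow> real" where
  "gfun p b y = y powr (p-1) * exp (-(b + 1/2) * y)"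

definition Kc :: "real \<Rightarrow> real \<Rightarrow> real" where
  "Kc p b = (b+1/2) powr p / Gamma p"

definition rho :: "real \<Rightarrow> real \<Rightarrow> real \<Rightarrow> real" where
  "rho p b y = Kc p b * (indicator {0<..} y * gfun p b y)"

definition nu :: "real \<Rightarrow> real \<Rightarrow> real measure" where
  "nu p b = density lborel (\<lambda>y. ennreal (rho p b y))"

lemma rho_meas[measurable]: "rho p b \<in> borel_measurable borel"
  unfolding rho_def gfun_def by measurable

lemma gfun_0[simp]: "gfun p b 0 = 0"
  by (simp add: gfun_def)

locale PB =
  fixes p b :: real
  assumes p: "p > 0" and b: "b \<ge> 1"
begin

lemma Kc_pos: "Kc p b > 0"
  using p b by (simp add: Kc_def Gamma_real_pos)

lemma rho_nonneg: "rho p b y \<ge> 0"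
  using Kc_pos by (simp add: rho_def gfun_def indicator_def)

lemma gfun_int: "set_integrable lborel {0<..} (gfun p b)"
  and gfun_integral: "(LINT y:{0<..}|lborel. gfun p b y) = Gamma p / (b+1/2) powr p"
  using gamma_int[OF p, of "b+1/2"] b unfolding gfun_def by (auto simp: mult.commute)

lemma rho_total: "(\<integral>\<^sup>+ y. ennreal (rho p b y) \<partial>lborel) = 1"
proof -
  have "integrable lborel (rho p b)"
    using gfun_int unfolding rho_def set_integrable_def by simp
  moreover have "integral\<^sup>L lborel (rho p b) = 1"
  proof -
    have G: "Gamma p \<noteq> 0" using Gamma_real_pos[OF p] by simp
    have B: "(b + 1/2) powr p \<noteq> 0" "b + 1/2 \<noteq> 0" using b by simp_all
    show ?thesis
      using gfun_integral unfolding rho_def Kc_def set_lebesgue_integral_def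
      by (simp add: G B)
  qed
  ultimately show ?thesis
    by (subst nn_integral_eq_integral) (auto simp: rho_nonneg)
qed

lemma nu_prob: "prob_space (nu p b)"
  by (rule prob_spaceI) (simp add: nu_def emeasure_density rho_total)

lemma nu_real_distribution: "real_distribution (nu p b)"
  unfolding real_distribution_def real_distribution_axioms_def
  by (simp add: nu_prob) (simp add: nu_def)

lemma Kc_alt: "(2*b+1) powr p / (2 powr p * Gamma p) = Kc p b"
proof -
  have e: "2*b+1 = 2 * (b+1/2)" by simp
  have "(2*b+1) powr p = 2 powr p * (b+1/2) powr p"
    unfolding e using b by (subst powr_mult) auto
  then show ?thesis by (simp add: Kc_def)
qed

lemma Dfun_alt: "Dfun p b t = Kc p b * (LINT y:{0..t}|lborel. gfun p b y)"
  unfolding Dfun_def Kc_alt[symmetric] gfun_def by simp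

lemma cdf_nu: "cdf (nu p b) t = Dfun p b t"
proof -
  have eq1: "ennreal (rho p b y) * indicator {..t} y = ennreal (Kc p b * (indicator {0<..t} y * gfun p b y))" for y
    by (auto simp: rho_def indicator_def)
  have int: "set_integrable lborel {0<..t} (gfun p b)"
    by (rule set_integrable_subset[OF gfun_int]) auto
  have "emeasure (nu p b) {..t} = (\<integral>\<^sup>+ y. ennreal (Kc p b * (indicator {0<..t} y * gfun p b y)) \<partial>lborel)"
    unfolding nu_def by (subst emeasure_density) (auto simp: eq1)
  also have "\<dots> = ennreal (Kc p b * (LINT y:{0<..t}|lborel. gfun p b y))"
    using int Kc_pos
    by (subst nn_integral_eq_integral)
       (auto simp: set_integrable_def set_lebesgue_integral_def gfun_def indicator_def)
  also have "(LINT y:{0<..t}|lborel. gfun p b y) = (LINT y:{0..t}|lborel. gfun p b y)"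
    unfolding set_lebesgue_integral_def
    by (rule Bochner_Integration.integral_cong) (auto simp: indicator_def)
  finally have "emeasure (nu p b) {..t} = ennreal (Dfun p b t)"
    by (simp add: Dfun_alt)
  moreover have "Dfun p b t \<ge> 0"
    unfolding Dfun_def using p b
    by (intro mult_nonneg_nonneg) (auto simp: Gamma_real_pos set_lebesgue_integral_def indicator_def)
  ultimately show ?thesis
    unfolding cdf_def measure_def by simp
qed


interpretation NU: real_distribution "nu p b" by (rule nu_real_distribution)

lemma rho_pos: "y > 0 \<Longrightarrow> rho p b y > 0"
  using Kc_pos by (simp add: rho_def gfun_def)

lemma rho_zero: "y \<le> 0 \<Longrightarrow> rho p b y = 0"
  by (simp add: rho_def)

lemma D_cont: "isCont (Dfun p b) t"
proof -
  have "emeasure (nu p b) {t} = (\<integral>\<^sup>+ y. ennreal (rho p b y) * indicator {t} y \<partial>lborel)"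
    unfolding nu_def by (subst emeasure_density) auto
  also have "\<dots> = (\<integral>\<^sup>+ (y::real). 0 \<partial>lborel)"
    by (intro nn_integral_cong_AE eventually_mono[OF AE_lborel_singleton[of t]]) auto
  finally have "measure (nu p b) {t} = 0" by (simp add: measure_def)
  then have "isCont (cdf (nu p b)) t" by (simp add: NU.isCont_cdf)
  moreover have "cdf (nu p b) = Dfun p b" by (rule ext) (simp add: cdf_nu)
  ultimately show ?thesis by simp
qed

lemma D_nonpos: "t \<le> 0 \<Longrightarrow> Dfun p b t = 0"
proof -
  assume t: "t \<le> 0"
  have "emeasure (nu p b) {..t} = (\<integral>\<^sup>+ y. ennreal (rho p b y) * indicator {..t} y \<partial>lborel)"
    unfolding nu_def by (subst emeasure_density) auto
  also have "\<dots> = (\<integral>\<^sup>+ (y::real). 0 \<partial>lborel)"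
    using t by (intro nn_integral_cong) (auto simp: indicator_def rho_zero)
  finally have "measure (nu p b) {..t} = 0" by (simp add: measure_def)
  then show ?thesis by (simp add: cdf_nu[symmetric] cdf_def)
qed

lemma D_mono: "s \<le> t \<Longrightarrow> Dfun p b s \<le> Dfun p b t"
  using NU.cdf_nondecreasing by (simp add: cdf_nu)

lemma D_lim: "(Dfun p b \<longlongrightarrow> 1) at_top"
proof -
  have "cdf (nu p b) = Dfun p b" by (rule ext) (simp add: cdf_nu)
  then show ?thesis using NU.cdf_lim_at_top_prob by simp
qed

lemma D_le1: "Dfun p b t \<le> 1"
  using NU.cdf_bounded_prob by (simp add: cdf_nu)

lemma D_strict: assumes "0 \<le> t1" "t1 < t2" shows "Dfun p b t1 < Dfun p b t2"
proof -
  have e: "emeasure (nu p b) {t1<..t2} = (\<integral>\<^sup>+ y. ennreal (rho p b y) * indicator {t1<..t2} y \<partial>lborel)"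
    unfolding nu_def by (subst emeasure_density) auto
  have "emeasure (nu p b) {t1<..t2} \<noteq> 0"
  proof
    assume "emeasure (nu p b) {t1<..t2} = 0"
    then have "AE y in lborel. ennreal (rho p b y) * indicator {t1<..t2} y = 0"
      unfolding e by (subst (asm) nn_integral_0_iff_AE) auto
    then have "AE y in lborel. y \<notin> {t1<..t2}"
    proof (rule eventually_mono)
      fix y assume "ennreal (rho p b y) * indicator {t1<..t2} y = 0"
      then show "y \<notin> {t1<..t2}" using rho_pos[of y] assms by (auto simp: indicator_def)
    qed
    then have "emeasure lborel {t1<..t2} = 0"
      by (subst (asm) AE_iff_measurable[of "{t1<..t2}"]) auto
    then show False using assms by simp
  qed
  then have "measure (nu p b) {t1<..t2} > 0"
    using NU.emeasure_eq_measure[of "{t1<..t2}"] by (auto simp: less_le)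
  then show ?thesis
    using NU.cdf_diff_eq[OF assms(2)] by (simp add: cdf_nu)
qed

lemma D_lt1: "Dfun p b t < 1"
proof (cases "t \<ge> 0")
  case True
  then show ?thesis using D_strict[of t "t+1"] D_le1[of "t+1"] by simp
next
  case False
  then show ?thesis using D_nonpos[of t] by simp
qed

lemma D_surj: assumes "0 \<le> s" "s < 1" shows "\<exists>t\<ge>0. Dfun p b t = s"
proof -
  from D_lim assms(2) have "eventually (\<lambda>t. Dfun p b t > s) at_top"
    by (rule order_tendstoD)
  then obtain T where T: "\<And>t. t \<ge> T \<Longrightarrow> Dfun p b t > s"
    by (auto simp: eventually_at_top_linorder)
  define T' where "T' = max T 0"
  have "Dfun p b 0 \<le> s" "s \<le> Dfun p b T'" "0 \<le> T'"
    using D_nonpos[of 0] assms T[of T'] by (auto simp: T'_def)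
  moreover have "continuous_on {0..T'} (Dfun p b)"
    using D_cont by (intro continuous_at_imp_continuous_on) auto
  ultimately obtain t where "0 \<le> t" "t \<le> T'" "Dfun p b t = s"
    using IVT'[of "Dfun p b" 0 s T'] by auto
  then show ?thesis by auto
qed


lemma phi_inj: "inj_on (\<lambda>t. Dfun p b (ln t)) {1..}"
proof (rule inj_onI)
  fix x y :: real assume xy: "x \<in> {1..}" "y \<in> {1..}" "Dfun p b (ln x) = Dfun p b (ln y)"
  show "x = y"
  proof (rule ccontr)
    assume "x \<noteq> y"
    then have "x < y \<or> y < x" by auto
    then show False
    proof
      assume "x < y"
      then have "Dfun p b (ln x) < Dfun p b (ln y)" using xy by (intro D_strict) auto
      then show False using xy by simp
    next
      assume "y < x"
      then have "Dfun p b (ln y) < Dfun p b (ln x)" using xy by (intro D_strict) auto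
      then show False using xy by simp
    qed
  qed
qed

lemma ffun_props: assumes "s \<in> {0..<1}"
  shows "ffun p b s \<ge> 1" "Dfun p b (ln (ffun p b s)) = s"
proof -
  obtain t where t: "t \<ge> 0" "Dfun p b t = s" using D_surj assms by auto
  have img: "s \<in> (\<lambda>t. Dfun p b (ln t)) ` {1..}"
    using t by (intro image_eqI[of _ _ "exp t"]) auto
  have "ffun p b s = the_inv_into {1..} (\<lambda>t. Dfun p b (ln t)) s"
    using assms by (simp add: ffun_def)
  then show "ffun p b s \<ge> 1" "Dfun p b (ln (ffun p b s)) = s"
    using the_inv_into_into[OF phi_inj img, of "{1..}"] f_the_inv_into_f[OF phi_inj img] by auto
qed

lemma ffun_key: assumes "s \<in> {0..<1}"
  shows "ln (ffun p b s) \<le> t \<longleftrightarrow> 0 \<le> t \<and> s \<le> Dfun p b t"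
proof -
  define y where "y = ln (ffun p b s)"
  have y: "y \<ge> 0" "Dfun p b y = s" using ffun_props[OF assms] by (auto simp: y_def)
  show ?thesis
    unfolding y_def[symmetric]
  proof
    assume "y \<le> t" then show "0 \<le> t \<and> s \<le> Dfun p b t" using y D_mono[of y t] by auto
  next
    assume "0 \<le> t \<and> s \<le> Dfun p b t"
    then show "y \<le> t" using D_strict[of t y] y by (cases "y \<le> t") auto
  qed
qed

lemma ffun_mono: "mono_on {0..<1} (ffun p b)"
proof (rule mono_onI)
  fix r s :: real assume rs: "r \<in> {0..<1}" "s \<in> {0..<1}" "r \<le> s"
  have "ln (ffun p b r) \<le> ln (ffun p b s)"
    using ffun_key[OF rs(1), of "ln (ffun p b s)"] ffun_props[OF rs(2)] ffun_props[OF rs(1)] rs(3)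
    by auto
  then show "ffun p b r \<le> ffun p b s"
    using ffun_props(1)[OF rs(1)] ffun_props(1)[OF rs(2)] by simp
qed

lemma suppf_eq: "suppf (ffun p b) = {0..<1}"
  using ffun_props(1) by (force simp: suppf_def ffun_def)

definition "M0 = restrict_space lborel {0..<(1::real)}"

lemma space_M0: "space M0 = {0..<1}"
  by (simp add: M0_def space_restrict_space)

lemma M0_prob: "prob_space M0"
  by (rule prob_spaceI) (simp add: space_M0 M0_def emeasure_restrict_space)

lemma T_meas: "(\<lambda>s. ln (ffun p b s)) \<in> borel_measurable M0"
proof -
  have "ffun p b \<in> borel_measurable (restrict_space borel {0..<1})"
    by (rule borel_measurable_mono_on_fnc[OF ffun_mono])
  then have "ffun p b \<in> borel_measurable M0"
    unfolding M0_def by (subst measurable_cong_sets[OF sets_restrict_space_cong[OF sets_lborel] refl])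
  then show ?thesis by measurable
qed

lemma distr_eq: "distr M0 borel (\<lambda>s. ln (ffun p b s)) = nu p b"
proof (rule cdf_unique)
  interpret M0: prob_space M0 by (rule M0_prob)
  show "real_distribution (distr M0 borel (\<lambda>s. ln (ffun p b s)))"
    using T_meas by simp
  show "real_distribution (nu p b)" by (rule nu_real_distribution)
  show "cdf (distr M0 borel (\<lambda>s. ln (ffun p b s))) = cdf (nu p b)"
  proof
    fix t
    have set: "(\<lambda>s. ln (ffun p b s)) -` {..t} \<inter> space M0 = (if 0 \<le> t then {0..Dfun p b t} else {})"
      using ffun_key D_lt1[of t] unfolding space_M0 by (auto simp: less_le_trans)
    have "cdf (distr M0 borel (\<lambda>s. ln (ffun p b s))) t
        = measure M0 ((\<lambda>s. ln (ffun p b s)) -` {..t} \<inter> space M0)"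
      unfolding cdf_def using T_meas by (subst measure_distr) auto
    also have "\<dots> = Dfun p b t"
    proof (cases "0 \<le> t")
      case True
      have "measure M0 {0..Dfun p b t} = measure lborel {0..Dfun p b t}"
        unfolding M0_def using D_lt1[of t] by (subst measure_restrict_space) auto
      then show ?thesis using True set D_mono[of 0 t] D_nonpos[of 0] by simp
    next
      case False
      then show ?thesis using set D_nonpos[of t] by simp
    qed
    finally show "cdf (distr M0 borel (\<lambda>s. ln (ffun p b s))) t = cdf (nu p b) t"
      by (simp add: cdf_nu)
  qed
qed


lemma transfer_int:
  fixes h :: "real \<Rightarrow> complex"
  assumes [measurable]: "h \<in> borel_measurable borel"
  shows "integral\<^sup>L lborel (\<lambda>s. indicator {0..<1} s *\<^sub>R h (ln (ffun p b s)))
       = integral\<^sup>L lborel (\<lambda>y. rho p b y *\<^sub>R h y)"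
proof -
  have "integral\<^sup>L lborel (\<lambda>s. indicator {0..<1} s *\<^sub>R h (ln (ffun p b s)))
      = integral\<^sup>L M0 (\<lambda>s. h (ln (ffun p b s)))"
    unfolding M0_def by (subst integral_restrict_space) auto
  also have "\<dots> = integral\<^sup>L (distr M0 borel (\<lambda>s. ln (ffun p b s))) h"
    using T_meas by (subst integral_distr) auto
  also have "\<dots> = integral\<^sup>L (nu p b) h" by (simp add: distr_eq)
  also have "\<dots> = integral\<^sup>L lborel (\<lambda>y. rho p b y *\<^sub>R h y)"
    unfolding nu_def by (subst integral_density) (auto simp: rho_nonneg)
  finally show ?thesis .
qed

lemma transfer_nn:
  fixes h :: "real \<Rightarrow> ennreal"
  assumes [measurable]: "h \<in> borel_measurable borel"
  shows "(\<integral>\<^sup>+ s. h (ln (ffun p b s)) * indicator {0..<1} s \<partial>lborel)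
       = (\<integral>\<^sup>+ y. ennreal (rho p b y) * h y \<partial>lborel)"
proof -
  have "(\<integral>\<^sup>+ s. h (ln (ffun p b s)) * indicator {0..<1} s \<partial>lborel)
      = (\<integral>\<^sup>+ s. h (ln (ffun p b s)) \<partial>M0)"
    unfolding M0_def by (subst nn_integral_restrict_space) auto
  also have "\<dots> = (\<integral>\<^sup>+ y. h y \<partial>(distr M0 borel (\<lambda>s. ln (ffun p b s))))"
    using T_meas by (subst nn_integral_distr) auto
  also have "\<dots> = (\<integral>\<^sup>+ y. h y \<partial>(nu p b))" by (simp add: distr_eq)
  also have "\<dots> = (\<integral>\<^sup>+ y. ennreal (rho p b y) * h y \<partial>lborel)"
    unfolding nu_def by (subst nn_integral_density) auto
  finally show ?thesis .
qed

definition "Ef x y = complex_of_real (y powr (p-1)) * exp (- ((complex_of_real b + \<i> * complex_of_real x) * complex_of_real y))"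
definition "Ff x = (LINT y:{0<..}|lborel. Ef x y)"

lemma m_plus_eq: "m_plus (\<lambda>x. x) 0 (ffun p b) x = complex_of_real (Kc p b) * Ff x"
proof -
  define h where "h y = complex_of_real (exp (y/2)) * exp (- \<i> * complex_of_real x * complex_of_real y)" for y
  have [measurable]: "h \<in> borel_measurable borel" unfolding h_def by measurable
  have "m_plus (\<lambda>x. x) 0 (ffun p b) x = integral\<^sup>L lborel (\<lambda>s. indicator {0..<1} s *\<^sub>R h (ln (ffun p b s)))"
    unfolding m_plus_def suppf_eq set_lebesgue_integral_def
  proof (rule Bochner_Integration.integral_cong[OF refl])
    fix s show "indicat_real {0..<1} s *\<^sub>R
         (complex_of_real (ffun p b s * \<bar>ffun p b s\<bar> powr ((0 - 1) / 2)) *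
          exp (- \<i> * complex_of_real x * complex_of_real (ln \<bar>ffun p b s\<bar>))) =
         indicat_real {0..<1} s *\<^sub>R h (ln (ffun p b s))"
    proof (cases "s \<in> {0..<1}")
      case True
      define L where "L = ln (ffun p b s)"
      have f: "ffun p b s = exp L" using ffun_props(1)[OF True] by (simp add: L_def)
      have "exp L * exp L powr ((0 - 1) / 2) = exp (L/2)"
        by (simp add: powr_def exp_add[symmetric])
      then show ?thesis using True unfolding h_def f by (simp add: L_def[symmetric])
    qed simp
  qed
  also have "\<dots> = integral\<^sup>L lborel (\<lambda>y. rho p b y *\<^sub>R h y)" by (rule transfer_int) simp
  also have "\<dots> = integral\<^sup>L lborel (\<lambda>y. complex_of_real (Kc p b) * (indicator {0<..} y *\<^sub>R Ef x y))"
  proof (rule Bochner_Integration.integral_cong[OF refl])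
    fix y
    have "exp (- (b + 1 / 2) * y) * exp (y / 2) = exp (- b * y)"
      by (simp add: exp_add[symmetric] algebra_simps)
    moreover have "exp (- ((complex_of_real b + \<i> * complex_of_real x) * complex_of_real y)) =
        complex_of_real (exp (- b * y)) * exp (- \<i> * complex_of_real x * complex_of_real y)"
      by (simp add: exp_of_real[symmetric] exp_add[symmetric] algebra_simps)
    ultimately show "rho p b y *\<^sub>R h y = complex_of_real (Kc p b) * (indicator {0<..} y *\<^sub>R Ef x y)"
      unfolding rho_def h_def Ef_def gfun_def scaleR_conv_of_real
      by (simp add: mult_ac)
         (metis (no_types, lifting) mult.assoc mult.left_commute of_real_mult)
  qed
  also have "\<dots> = complex_of_real (Kc p b) * Ff x"
    unfolding Ff_def set_lebesgue_integral_def scaleR_conv_of_real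
    by (subst integral_mult_right_zero[symmetric]) (simp add: mult_ac)
  finally show ?thesis .
qed



end




context PB begin

definition "E1 x y = complex_of_real (y powr p) * exp (- ((complex_of_real b + \<i> * complex_of_real x) * complex_of_real y))"
definition "Jf x = (LINT y:{0<..}|lborel. E1 x y)"

lemma Ef_meas[measurable]: "Ef x \<in> borel_measurable borel"
  unfolding Ef_def by measurable
lemma E1_meas[measurable]: "E1 x \<in> borel_measurable borel"
  unfolding E1_def by measurable

lemma norm_exp_z: "norm (exp (- ((complex_of_real b + \<i> * complex_of_real x) * complex_of_real y))) = exp (- b * y)"
  by (simp add: norm_exp_eq_Re)

lemma Ef_norm: "norm (Ef x y) = y powr (p-1) * exp (- b * y)"
  unfolding Ef_def by (simp add: norm_mult norm_exp_z del: mult_minus_left)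
lemma E1_norm: "norm (E1 x y) = y powr p * exp (- b * y)"
  unfolding E1_def by (simp add: norm_mult norm_exp_z del: mult_minus_left)

lemma gamma_int_b:
  assumes "q > 0"
  shows "set_integrable lborel {0<..} (\<lambda>y. y powr (q-1) * exp (-b*y))"
  using gamma_int(1)[OF assms, of b] b by simp

lemma Ef_int: "set_integrable lborel {0<..} (Ef x)"
proof -
  have e: "(\<lambda>y. norm (indicator {0<..} y *\<^sub>R Ef x y)) = (\<lambda>y. indicator {0<..} y *\<^sub>R (y powr (p-1) * exp (-b*y)))"
    by (rule ext) (simp add: indicator_def Ef_norm)
  show ?thesis
    unfolding set_integrable_def
  proof (rule integrable_norm_cancel)
    show "integrable lborel (\<lambda>y. norm (indicator {0<..} y *\<^sub>R Ef x y))"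
      unfolding e using gamma_int_b[OF p] by (simp add: set_integrable_def)
  qed simp
qed

lemma E1_int: "set_integrable lborel {0<..} (E1 x)"
proof -
  have "set_integrable lborel {0<..} (\<lambda>y. y powr (p+1-1) * exp (-b*y))"
    by (rule gamma_int_b) (use p in simp)
  then have i: "set_integrable lborel {0<..} (\<lambda>y. y powr p * exp (-b*y))" by simp
  have e: "(\<lambda>y. norm (indicator {0<..} y *\<^sub>R E1 x y)) = (\<lambda>y. indicator {0<..} y *\<^sub>R (y powr p * exp (-b*y)))"
    by (rule ext) (simp add: indicator_def E1_norm)
  show ?thesis
    unfolding set_integrable_def
  proof (rule integrable_norm_cancel)
    show "integrable lborel (\<lambda>y. norm (indicator {0<..} y *\<^sub>R E1 x y))"
      unfolding e using i by (simp add: set_integrable_def)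
  qed simp
qed

lemma C2_int: "set_integrable lborel {0<..} (\<lambda>y. y powr (p+1) * exp (-b*y))"
proof -
  have e: "p+2-1 = p+1" by simp
  have "set_integrable lborel {0<..} (\<lambda>y. y powr (p+2-1) * exp (-b*y))"
    by (rule gamma_int_b) (use p in simp)
  then show ?thesis unfolding e .
qed


lemma pt_id: assumes t: "t > 0"
  shows "Ef y t - Ef x t + complex_of_real (y - x) * \<i> * E1 x t
       = Ef x t * (iexp (- (y - x) * t) - (\<Sum>k\<le>1. (\<i> * complex_of_real (- (y - x) * t)) ^ k / fact k))"
proof -
  have e1: "E1 x t = complex_of_real t * Ef x t"
    using t by (simp add: E1_def Ef_def powr_diff of_real_divide field_simps)
  have e2: "Ef y t = Ef x t * iexp (- (y - x) * t)"
    unfolding Ef_def by (simp add: exp_add[symmetric] algebra_simps)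
  show ?thesis unfolding e1 e2 by (simp add: algebra_simps)
qed

lemma pt_bound: assumes t: "t > 0"
  shows "norm (Ef y t - Ef x t + complex_of_real (y - x) * \<i> * E1 x t)
       \<le> (y - x)^2 / 2 * (t powr (p+1) * exp (-b*t))"
proof -
  have "norm (Ef y t - Ef x t + complex_of_real (y - x) * \<i> * E1 x t)
      = norm (Ef x t) * norm (iexp (- (y - x) * t) - (\<Sum>k\<le>1. (\<i> * complex_of_real (- (y - x) * t)) ^ k / fact k))"
    unfolding pt_id[OF t] by (rule norm_mult)
  also have "\<dots> \<le> norm (Ef x t) * (\<bar>- (y - x) * t\<bar> ^ Suc 1 / fact (Suc 1))"
    by (rule mult_left_mono[OF iexp_approx1]) simp
  also have "\<bar>- (y - x) * t\<bar> ^ Suc 1 / fact (Suc 1) = (y - x)^2 / 2 * t^2"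
    unfolding Suc_1 power2_abs fact_2 power_mult_distrib power2_minus by simp
  also have "norm (Ef x t) * ((y - x)^2 / 2 * t^2) = (y - x)^2 / 2 * ((t powr (p-1) * t^2) * exp (-b*t))"
    by (simp add: Ef_norm)
  also have "t powr (p-1) * t^2 = t powr (p+1)"
  proof -
    have "t^2 = t powr 2" using t by (simp add: powr_realpow)
    then have "t powr (p-1) * t^2 = t powr (p - 1 + 2)" by (simp only: powr_add)
    moreover have "p - 1 + 2 = p + 1" by simp
    ultimately show ?thesis by simp
  qed
  finally show ?thesis .
qed

definition "C2 = (LINT y:{0<..}|lborel. y powr (p+1) * exp (-b*y))"

lemma diff_bound: "norm (Ff y - Ff x - (y - x) *\<^sub>R (- \<i> * Jf x)) \<le> (y - x)^2 / 2 * C2"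
proof -
  have i1: "integrable lborel (\<lambda>t. indicator {0<..} t *\<^sub>R Ef z t)" for z
    using Ef_int by (simp add: set_integrable_def)
  have i2: "integrable lborel (\<lambda>t. indicator {0<..} t *\<^sub>R E1 x t)"
    using E1_int by (simp add: set_integrable_def)
  have i3: "integrable lborel (\<lambda>t. indicator {0<..} t *\<^sub>R (t powr (p+1) * exp (-b*t)))"
    using C2_int by (simp add: set_integrable_def)
  have pw: "norm (indicator {0<..} t *\<^sub>R (Ef y t - Ef x t + complex_of_real (y - x) * \<i> * E1 x t))
        \<le> (y - x)^2 / 2 * (indicator {0<..} t *\<^sub>R (t powr (p+1) * exp (-b*t)))" for t
  proof (cases "t > 0")
    case True
    then have ind: "indicator {0<..} t = (1::real)" by simp
    show ?thesis unfolding ind scaleR_one by (rule pt_bound[OF True])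
  next
    case False
    then have ind: "indicator {0<..} t = (0::real)" by simp
    show ?thesis unfolding ind by simp
  qed
  have i4: "integrable lborel (\<lambda>t. (y - x)^2 / 2 * (indicator {0<..} t *\<^sub>R (t powr (p+1) * exp (-b*t))))"
    by (intro integrable_mult_right i3)
  define c where "c = complex_of_real (y - x) * \<i>"
  have fe: "(\<lambda>t. indicator {0<..} t *\<^sub>R (Ef y t - Ef x t + complex_of_real (y - x) * \<i> * E1 x t))
     = (\<lambda>t. indicator {0<..} t *\<^sub>R Ef y t - indicator {0<..} t *\<^sub>R Ef x t + c * (indicator {0<..} t *\<^sub>R E1 x t))"
    by (rule ext) (simp add: c_def scaleR_conv_of_real algebra_simps)
  have iall: "integrable lborel (\<lambda>t. indicator {0<..} t *\<^sub>R (Ef y t - Ef x t + complex_of_real (y - x) * \<i> * E1 x t))"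
    unfolding fe by (intro Bochner_Integration.integrable_add Bochner_Integration.integrable_diff integrable_mult_right i1 i2)
  have "integral\<^sup>L lborel (\<lambda>t. indicator {0<..} t *\<^sub>R (Ef y t - Ef x t + complex_of_real (y - x) * \<i> * E1 x t))
     = Ff y - Ff x + c * Jf x"
  proof -
    have a: "integrable lborel (\<lambda>t. indicator {0<..} t *\<^sub>R Ef y t - indicator {0<..} t *\<^sub>R Ef x t)"
      by (intro Bochner_Integration.integrable_diff i1)
    have b: "integrable lborel (\<lambda>t. c * (indicator {0<..} t *\<^sub>R E1 x t))"
      by (intro integrable_mult_right i2)
    show ?thesis
      unfolding fe Ff_def Jf_def set_lebesgue_integral_def Bochner_Integration.integral_add[OF a b] Bochner_Integration.integral_diff[OF i1 i1]
        integral_mult_right_zero ..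
  qed
  moreover have "Ff y - Ff x - (y - x) *\<^sub>R (- \<i> * Jf x) = Ff y - Ff x + c * Jf x"
    by (simp add: c_def scaleR_conv_of_real)
  ultimately have eqI: "Ff y - Ff x - (y - x) *\<^sub>R (- \<i> * Jf x)
     = integral\<^sup>L lborel (\<lambda>t. indicator {0<..} t *\<^sub>R (Ef y t - Ef x t + complex_of_real (y - x) * \<i> * E1 x t))"
    by simp
  have "norm (Ff y - Ff x - (y - x) *\<^sub>R (- \<i> * Jf x)) \<le> integral\<^sup>L lborel (\<lambda>t. (y - x)^2 / 2 * (indicator {0<..} t *\<^sub>R (t powr (p+1) * exp (-b*t))))"
    unfolding eqI by (rule Bochner_Integration.integral_norm_bound_integral[OF iall i4 pw])
  also have "\<dots> = (y - x)^2 / 2 * C2"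
    unfolding C2_def set_lebesgue_integral_def by (rule integral_mult_right_zero)
  finally show ?thesis .
qed

lemma C2_nonneg: "C2 \<ge> 0"
  unfolding C2_def set_lebesgue_integral_def by (simp add: indicator_def)

lemma Ff_deriv: "(Ff has_vector_derivative (- \<i> * Jf x)) (at x)"
  unfolding has_vector_derivative_def has_derivative_iff_norm
proof (intro conjI bounded_linear_scaleR_left)
  show "((\<lambda>y. norm (Ff y - Ff x - (y - x) *\<^sub>R (- \<i> * Jf x)) / norm (y - x)) \<longlongrightarrow> 0) (at x)"
  proof (rule Lim_null_comparison)
    show "\<forall>\<^sub>F y in at x. norm (norm (Ff y - Ff x - (y - x) *\<^sub>R (- \<i> * Jf x)) / norm (y - x)) \<le> \<bar>y - x\<bar> * C2 / 2"
    proof (rule always_eventually, rule allI)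
      fix y
      show "norm (norm (Ff y - Ff x - (y - x) *\<^sub>R (- \<i> * Jf x)) / norm (y - x)) \<le> \<bar>y - x\<bar> * C2 / 2"
      proof (cases "y = x")
        case True then show ?thesis by simp
      next
        case False
        then have pos: "\<bar>y - x\<bar> > 0" by simp
        have "norm (Ff y - Ff x - (y - x) *\<^sub>R (- \<i> * Jf x)) \<le> \<bar>y - x\<bar> * (\<bar>y - x\<bar> * C2 / 2)"
          using diff_bound[of y x] by (simp add: power2_eq_square abs_mult_self_eq)
        then show ?thesis using pos by (simp add: divide_le_eq mult.commute)
      qed
    qed
    show "((\<lambda>y. \<bar>y - x\<bar> * C2 / 2) \<longlongrightarrow> 0) (at x)"
    proof -
      have "((\<lambda>y. \<bar>y - x\<bar> * C2 / 2) \<longlongrightarrow> \<bar>x - x\<bar> * C2 / 2) (at x)"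
        by (intro tendsto_intros) simp
      then show ?thesis by simp
    qed
  qed
qed

end




context PB begin

lemma E1_deriv:
  assumes y: "y > 0"
  shows "(E1 x has_vector_derivative (complex_of_real p * Ef x y - (complex_of_real b + \<i> * complex_of_real x) * E1 x y)) (at y)"
proof -
  define z where "z = complex_of_real b + \<i> * complex_of_real x"
  have d1: "((\<lambda>y. complex_of_real (y powr p)) has_vector_derivative complex_of_real (p * y powr (p-1))) (at y)"
    by (rule has_vector_derivative_of_real[OF has_real_derivative_powr[OF y]])
  have d0: "((\<lambda>w. exp (-(z * w))) has_field_derivative (exp (-(z * complex_of_real y)) * (- z))) (at (complex_of_real y))"
    by (auto intro!: derivative_eq_intros)
  have d2: "((\<lambda>y. exp (-(z * complex_of_real y))) has_vector_derivative (exp (-(z * complex_of_real y)) * (- z))) (at y)"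
    using has_vector_derivative_real_field[OF d0] by simp
  have "((\<lambda>y. complex_of_real (y powr p) * exp (-(z * complex_of_real y))) has_vector_derivative
      (complex_of_real (y powr p) * (exp (-(z * complex_of_real y)) * (- z)) + complex_of_real (p * y powr (p-1)) * exp (-(z * complex_of_real y)))) (at y)"
    by (rule has_vector_derivative_mult[OF d1 d2])
  moreover have "(\<lambda>y. complex_of_real (y powr p) * exp (-(z * complex_of_real y))) = E1 x"
    by (rule ext) (simp add: E1_def z_def)
  moreover have "complex_of_real (y powr p) * (exp (-(z * complex_of_real y)) * (- z)) + complex_of_real (p * y powr (p-1)) * exp (-(z * complex_of_real y))
      = complex_of_real p * Ef x y - z * E1 x y"
    by (simp add: E1_def Ef_def z_def algebra_simps)
  ultimately show ?thesis by (simp add: z_def)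
qed

lemma E1_cont: "y > 0 \<Longrightarrow> isCont (E1 x) y"
  by (rule has_vector_derivative_continuous[OF E1_deriv])

lemma Ef_cont: "y > 0 \<Longrightarrow> isCont (Ef x) y"
  unfolding Ef_def by (intro continuous_intros) auto

lemma E1_lim0: "(E1 x \<longlongrightarrow> 0) (at_right 0)"
proof -
  have "((\<lambda>y. y powr p * exp (- b * y)) \<longlongrightarrow> 0) (at_right 0)"
    using p b by real_asymp
  then show ?thesis
    by (subst tendsto_norm_zero_iff[symmetric]) (simp add: E1_norm)
qed

lemma E1_limtop: "(E1 x \<longlongrightarrow> 0) at_top"
proof -
  have "((\<lambda>y. y powr p * exp (- b * y)) \<longlongrightarrow> 0) at_top"
    using p b by real_asymp
  then show ?thesis
    by (subst tendsto_norm_zero_iff[symmetric]) (simp add: E1_norm)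
qed

lemma IBP: "(complex_of_real b + \<i> * complex_of_real x) * Jf x = complex_of_real p * Ff x"
proof -
  define z where "z = complex_of_real b + \<i> * complex_of_real x"
  define f where "f y = complex_of_real p * Ef x y - z * E1 x y" for y
  have ein: "einterval 0 \<infinity> = {0<..}"
    by (auto simp: einterval_def zero_ereal_def)
  have i1: "integrable lborel (\<lambda>t. indicator {0<..} t *\<^sub>R Ef x t)"
    using Ef_int by (simp add: set_integrable_def)
  have i2: "integrable lborel (\<lambda>t. indicator {0<..} t *\<^sub>R E1 x t)"
    using E1_int by (simp add: set_integrable_def)
  have fe: "(\<lambda>t. indicator {0<..} t *\<^sub>R f t) = (\<lambda>t. complex_of_real p * (indicator {0<..} t *\<^sub>R Ef x t) - z * (indicator {0<..} t *\<^sub>R E1 x t))"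
    by (rule ext) (simp add: f_def scaleR_conv_of_real algebra_simps)
  have fint: "set_integrable lborel (einterval 0 \<infinity>) f"
    unfolding ein set_integrable_def fe
    by (intro Bochner_Integration.integrable_diff integrable_mult_right i1 i2)
  have "(LBINT y=0..\<infinity>. f y) = 0 - 0"
  proof (rule interval_integral_FTC_integrable[where F = "E1 x"])
    show "(0::ereal) < \<infinity>" by simp
    fix y assume "0 < ereal y" "ereal y < \<infinity>"
    then have y: "y > 0" by (simp add: zero_ereal_def)
    show "(E1 x has_vector_derivative f y) (at y)"
      unfolding f_def z_def by (rule E1_deriv[OF y])
    show "isCont f y"
      unfolding f_def using Ef_cont[OF y] E1_cont[OF y] by (intro continuous_intros) auto
  next
    show "set_integrable lborel (einterval 0 \<infinity>) f" by (rule fint)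
    show "((E1 x \<circ> real_of_ereal) \<longlongrightarrow> 0) (at_right 0)"
      unfolding zero_ereal_def ereal_tendsto_simps1 by (rule E1_lim0)
    show "((E1 x \<circ> real_of_ereal) \<longlongrightarrow> 0) (at_left \<infinity>)"
      unfolding ereal_tendsto_simps1 by (rule E1_limtop)
  qed
  moreover have "(LBINT y=0..\<infinity>. f y) = complex_of_real p * Ff x - z * Jf x"
  proof -
    have a: "integrable lborel (\<lambda>t. complex_of_real p * (indicator {0<..} t *\<^sub>R Ef x t))"
      by (intro integrable_mult_right i1)
    have b': "integrable lborel (\<lambda>t. z * (indicator {0<..} t *\<^sub>R E1 x t))"
      by (intro integrable_mult_right i2)
    have le: "(0::ereal) \<le> \<infinity>" by simp
    show ?thesis
      unfolding interval_lebesgue_integral_def if_P[OF le] ein set_lebesgue_integral_def Ff_def Jf_def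
      by (simp only: fe Bochner_Integration.integral_diff[OF a b'] integral_mult_right_zero)
  qed
  ultimately show ?thesis by (simp add: z_def)
qed


definition "zf x = complex_of_real b + \<i> * complex_of_real x"

lemma zf_nonpos: "zf x \<notin> \<real>\<^sub>\<le>\<^sub>0"
  using b by (simp add: zf_def complex_nonpos_Reals_iff)

lemma zf_nz: "zf x \<noteq> 0"
proof
  assume "zf x = 0" then show False using zf_nonpos[of x] by (simp add: complex_nonpos_Reals_iff)
qed

lemma H_deriv: "((\<lambda>x. Ff x * zf x powr complex_of_real p) has_vector_derivative 0) (at x)"
proof -
  have dz: "(zf has_vector_derivative \<i>) (at x)"
    unfolding zf_def by (auto intro!: derivative_eq_intros)
  have dp: "((\<lambda>w. w powr complex_of_real p) has_field_derivative (complex_of_real p * zf x powr (complex_of_real p - 1))) (at (zf x))"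
    by (rule has_field_derivative_powr[OF zf_nonpos])
  have ch: "((\<lambda>x. zf x powr complex_of_real p) has_vector_derivative (\<i> * (complex_of_real p * zf x powr (complex_of_real p - 1)))) (at x)"
    using field_vector_diff_chain_at[OF dz dp] by (simp add: o_def)
  have m: "((\<lambda>x. Ff x * zf x powr complex_of_real p) has_vector_derivative
      (Ff x * (\<i> * (complex_of_real p * zf x powr (complex_of_real p - 1))) + (- \<i> * Jf x) * zf x powr complex_of_real p)) (at x)"
    by (rule has_vector_derivative_mult[OF Ff_deriv ch])
  have zp: "zf x powr complex_of_real p = zf x powr (complex_of_real p - 1) * zf x"
  proof -
    have "zf x powr complex_of_real p = zf x powr ((complex_of_real p - 1) + 1)" by simp
    also have "\<dots> = zf x powr (complex_of_real p - 1) * zf x powr 1" by (rule powr_add)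
    also have "zf x powr 1 = zf x" using zf_nz by (simp add: powr_def)
    finally show ?thesis .
  qed
  have "Ff x * (\<i> * (complex_of_real p * zf x powr (complex_of_real p - 1))) + (- \<i> * Jf x) * zf x powr complex_of_real p
      = \<i> * zf x powr (complex_of_real p - 1) * (complex_of_real p * Ff x - zf x * Jf x)"
    unfolding zp by (simp add: algebra_simps)
  also have "\<dots> = 0" using IBP[of x] by (simp add: zf_def)
  finally have e: "Ff x * (\<i> * (complex_of_real p * zf x powr (complex_of_real p - 1))) + (- \<i> * Jf x) * zf x powr complex_of_real p = 0" .
  show ?thesis using m unfolding e .
qed

lemma Ff0: "Ff 0 = complex_of_real (Gamma p / b powr p)"
proof -
  have "Ff 0 = (LINT y:{0<..}|lborel. complex_of_real (y powr (p-1) * exp (-b*y)))"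
    unfolding Ff_def Ef_def by (simp add: exp_of_real[symmetric])
  also have "\<dots> = complex_of_real (Gamma p / b powr p)"
    by (subst set_integral_complex_of_real) (use gamma_int(2)[OF p, of b] b in simp)
  finally show ?thesis .
qed

lemma modF: "norm (Ff x) * norm (zf x) powr p = Gamma p"
proof -
  obtain c where c: "\<And>x. x \<in> UNIV \<Longrightarrow> Ff x * zf x powr complex_of_real p = c"
    using has_vector_derivative_zero_constant[of UNIV "\<lambda>x. Ff x * zf x powr complex_of_real p"] H_deriv
    by auto
  have "Ff x * zf x powr complex_of_real p = Ff 0 * zf 0 powr complex_of_real p"
    using c[of x] c[of 0] by simp
  also have "zf 0 powr complex_of_real p = complex_of_real (b powr p)"
    using b by (simp add: zf_def powr_of_real)
  also have "Ff 0 * complex_of_real (b powr p) = complex_of_real (Gamma p)"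
  proof -
    have "Gamma p / b powr p * b powr p = Gamma p" using b by simp
    then show ?thesis by (simp only: Ff0 of_real_mult[symmetric])
  qed
  finally have "norm (Ff x * zf x powr complex_of_real p) = norm (complex_of_real (Gamma p))"
    by simp
  then show ?thesis
    using Gamma_real_pos[OF p] by (simp add: norm_mult norm_powr_real_powr')
qed

end




context PB begin

lemma nn_finite:
  "(\<integral>\<^sup>+ s\<in>suppf (ffun p b). ennreal (\<bar>ffun p b s\<bar> powr (1 + (0-1)/2)) \<partial>lborel) < \<infinity>"
proof -
  define h where "h y = ennreal (exp (y/2))" for y
  have [measurable]: "h \<in> borel_measurable borel" unfolding h_def by measurable
  have "(\<integral>\<^sup>+ s\<in>suppf (ffun p b). ennreal (\<bar>ffun p b s\<bar> powr (1 + (0-1)/2)) \<partial>lborel)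
      = (\<integral>\<^sup>+ s. h (ln (ffun p b s)) * indicator {0..<1} s \<partial>lborel)"
    unfolding suppf_eq
  proof (rule nn_integral_cong)
    fix s :: real
    show "ennreal (\<bar>ffun p b s\<bar> powr (1 + (0 - 1) / 2)) * indicator {0..<1} s =
          h (ln (ffun p b s)) * indicator {0..<1} s"
    proof (cases "s \<in> {0..<1}")
      case True
      have f: "ffun p b s \<ge> 1" using ffun_props(1)[OF True] .
      then have "\<bar>ffun p b s\<bar> powr (1 + (0 - 1) / 2) = exp (ln (ffun p b s) / 2)"
        by (simp add: powr_def)
      then show ?thesis by (simp add: h_def)
    qed simp
  qed
  also have "\<dots> = (\<integral>\<^sup>+ y. ennreal (rho p b y) * h y \<partial>lborel)"
    by (rule transfer_nn) simp
  also have "\<dots> = (\<integral>\<^sup>+ y. ennreal (Kc p b) * ennreal (indicator {0<..} y * (y powr (p-1) * exp (-b*y))) \<partial>lborel)"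
  proof (rule nn_integral_cong)
    fix y :: real
    have "exp (- (b + 1 / 2) * y) * exp (y / 2) = exp (- b * y)"
      by (simp add: exp_add[symmetric] algebra_simps)
    then have "rho p b y * exp (y/2) = Kc p b * (indicator {0<..} y * (y powr (p-1) * exp (-b*y)))"
      unfolding rho_def gfun_def by (simp add: mult_ac)
    then show "ennreal (rho p b y) * h y = ennreal (Kc p b) * ennreal (indicator {0<..} y * (y powr (p-1) * exp (-b*y)))"
      unfolding h_def using Kc_pos
      by (simp add: ennreal_mult'[symmetric] ennreal_mult[symmetric] rho_nonneg)
  qed
  also have "\<dots> = ennreal (Kc p b) * ennreal (Gamma p / b powr p)"
  proof -
    have "(\<integral>\<^sup>+ y. ennreal (indicator {0<..} y * (y powr (p-1) * exp (-b*y))) \<partial>lborel) = ennreal (Gamma p / b powr p)"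
      using gamma_nn[OF p, of b] b by simp
    then show ?thesis by (subst nn_integral_cmult) auto
  qed
  also have "\<dots> < \<infinity>" by (simp add: ennreal_mult_less_top)
  finally show ?thesis .
qed

lemma m_minus_eq: "m_minus (\<lambda>x. x) 0 (ffun p b) x = m_plus (\<lambda>x. x) 0 (ffun p b) x"
  unfolding m_minus_def m_plus_def suppf_eq
  apply (rule set_lebesgue_integral_cong)
  subgoal by simp
  apply (intro allI impI)
  subgoal for s using ffun_props(1)[of s] by simp
  done

lemma norm_m: "norm (m_plus (\<lambda>x. x) 0 (ffun p b) x) = (b + 1/2) powr p / norm (zf x) powr p"
proof -
  have "norm (zf x) > 0" using zf_nz by simp
  then have "norm (Ff x) = Gamma p / norm (zf x) powr p"
    using modF[of x] by (simp add: field_simps)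
  moreover have "norm (complex_of_real (Kc p b) * Ff x) = Kc p b * norm (Ff x)"
    using Kc_pos by (simp add: norm_mult)
  ultimately show ?thesis
    using Gamma_real_pos[OF p] unfolding m_plus_eq Kc_def by simp
qed

lemma lower: "1 * (1 + \<bar>x\<bar>) powr (-p) \<le> norm (m_plus (\<lambda>x. x) 0 (ffun p b) x)"
proof -
  have nz: "norm (zf x) \<le> (b + 1/2) * (1 + \<bar>x\<bar>)"
  proof -
    have "norm (zf x) \<le> norm (complex_of_real b) + norm (\<i> * complex_of_real x)"
      unfolding zf_def by (rule norm_triangle_ineq)
    also have "\<dots> = b + \<bar>x\<bar>" using b by (simp add: norm_mult)
    also have "\<dots> \<le> (b + 1/2) * (1 + \<bar>x\<bar>)"
    proof -
      have e: "(b + 1/2) * (1 + \<bar>x\<bar>) = b + \<bar>x\<bar> + (1/2 + (b - 1/2) * \<bar>x\<bar>)"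
        by (simp add: algebra_simps)
      have "0 \<le> (b - 1/2) * \<bar>x\<bar>" using b by simp
      then show ?thesis unfolding e by linarith
    qed
    finally show ?thesis .
  qed
  have pos: "norm (zf x) > 0" using zf_nz by simp
  have "norm (zf x) powr p \<le> ((b + 1/2) * (1 + \<bar>x\<bar>)) powr p"
    using nz pos p by (intro powr_mono2) auto
  also have "\<dots> = (b + 1/2) powr p * (1 + \<bar>x\<bar>) powr p"
    using b by (simp add: powr_mult)
  finally have le: "norm (zf x) powr p \<le> (b + 1/2) powr p * (1 + \<bar>x\<bar>) powr p" .
  have "1 * (1 + \<bar>x\<bar>) powr (-p) = (b + 1/2) powr p / ((b + 1/2) powr p * (1 + \<bar>x\<bar>) powr p)"
    using b by (simp add: powr_minus field_simps)
  also have "\<dots> \<le> (b + 1/2) powr p / norm (zf x) powr p"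
    using le pos b by (intro divide_left_mono) auto
  finally show ?thesis by (simp add: norm_m)
qed

end

theorem mainTheorem7:
  fixes p b :: real
  assumes "p > 0" and "b \<ge> 1"
  defines "c \<equiv> (0::real)" and "u \<equiv> (\<lambda>x::real. x)" and "\<beta> \<equiv> (1::real)"
  shows "(\<integral>\<^sup>+ s\<in>suppf (ffun p b). ennreal (\<bar>ffun p b s\<bar> powr (\<beta> + (c-1)/2)) \<partial>lborel) < \<infinity>
    \<and> (\<exists>\<gamma>>0. \<forall>x::real.
          norm (m_plus u c (ffun p b) x) \<ge> \<gamma> * (1 + \<bar>x\<bar>) powr (-p)
        \<and> norm (m_minus u c (ffun p b) x) \<ge> \<gamma> * (1 + \<bar>x\<bar>) powr (-p))"
proof -
  interpret PB p b by unfold_locales (use assms in auto)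
  show ?thesis
    unfolding c_def u_def \<beta>_def
    using nn_finite lower m_minus_eq by (intro conjI exI[of _ 1]) auto
qed


end
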